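(* For every integer $n\geq 3$, $$\dot{\imath}_{[1,2]}(P_3\Box P_n)=\begin{cases}\left\lfloor \frac{3n+8}{4}\right\rfloor & \text{if } n\equiv 2 \pmod 4,\\[2pt] \left\lfloor \frac{3n+4}{4}\right\rfloor & \text{otherwise.}\end{cases}$$
   Context: $P_k$ denotes the path on $k$ vertices and $P_m\Box P_n$ the Cartesian product of two paths (the $m\times n$ grid graph). A set $S$ of vertices of a graph $G$ is independent if no two vertices of $S$ are adjacent, and dominating if every vertex not in $S$ has at least one neighbor in $S$. An independent $[1,2]$-set of $G$ is an independent dominating set $S$ such that every vertex $v\in V(G)\setminus S$ has at least one and at most two neighbors in $S$. When $G$ has an independent $[1,2]$-set, $\dot{\imath}_{[1,2]}(G)$ denotes the minimum cardinality of an independent $[1,2]$-set of $G$ (the statement includes the existence of such a set). *)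

theory Defs
  imports Main
begin

text \<open>A graph is given by a vertex set V and a (symmetric, irreflexive) adjacency relation E.\<close>

definition independent_set :: "'a set \<Rightarrow> ('a \<Rightarrow> 'a \<Rightarrow> bool) \<Rightarrow> 'a set \<Rightarrow> bool" where
  "independent_set V E S \<longleftrightarrow> S \<subseteq> V \<and> (\<forall>u\<in>S. \<forall>v\<in>S. \<not> E u v)"

definition dominating_set :: "'a set \<Rightarrow> ('a \<Rightarrow> 'a \<Rightarrow> bool) \<Rightarrow> 'a set \<Rightarrow> bool" where
  "dominating_set V E S \<longleftrightarrow> S \<subseteq> V \<and> (\<forall>v\<in>V - S. \<exists>u\<in>S. E v u)"

definition indep_12_set :: "'a set \<Rightarrow> ('a \<Rightarrow> 'a \<Rightarrow> bool) \<Rightarrow> 'a set \<Rightarrow> bool" where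
  "indep_12_set V E S \<longleftrightarrow> independent_set V E S \<and> dominating_set V E S \<and>
     (\<forall>v\<in>V - S. 1 \<le> card {u\<in>S. E v u} \<and> card {u\<in>S. E v u} \<le> 2)"

definition has_indep_12_set :: "'a set \<Rightarrow> ('a \<Rightarrow> 'a \<Rightarrow> bool) \<Rightarrow> bool" where
  "has_indep_12_set V E \<longleftrightarrow> (\<exists>S. indep_12_set V E S)"

text \<open>Minimum cardinality of an independent [1,2]-set (meaningful for finite graphs having one).\<close>
definition indep_12_number :: "'a set \<Rightarrow> ('a \<Rightarrow> 'a \<Rightarrow> bool) \<Rightarrow> nat" where
  "indep_12_number V E = (LEAST k. \<exists>S. indep_12_set V E S \<and> card S = k)"

definition grid_vertices :: "nat \<Rightarrow> nat \<Rightarrow> (nat \<times> nat) set" where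
  "grid_vertices m n = {0..<m} \<times> {0..<n}"

definition grid_adj :: "nat \<times> nat \<Rightarrow> nat \<times> nat \<Rightarrow> bool" where
  "grid_adj p q \<longleftrightarrow> (fst p = fst q \<and> (snd p = Suc (snd q) \<or> snd q = Suc (snd p)))
                   \<or> (snd p = snd q \<and> (fst p = Suc (fst q) \<or> fst q = Suc (fst p)))"

end

theory Submission
  imports Defs
begin

datatype col = CE | CT | CM | CB | CTB

fun mem :: "col \<Rightarrow> nat \<Rightarrow> bool" where
  "mem CE i = False"
| "mem CT i = (i = 0)"
| "mem CM i = (i = 1)"
| "mem CB i = (i = 2)"
| "mem CTB i = (i = 0 \<or> i = 2)"

fun w :: "col \<Rightarrow> nat" where
  "w CE = 0" | "w CT = 1" | "w CM = 1" | "w CB = 1" | "w CTB = 2"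

definition cnt :: "col \<Rightarrow> col \<Rightarrow> col \<Rightarrow> nat \<Rightarrow> nat" where
  "cnt a b c i = of_bool (mem a i) + of_bool (mem c i) + of_bool (0 < i \<and> mem b (i - 1)) + of_bool (mem b (Suc i))"

definition okv :: "col \<Rightarrow> col \<Rightarrow> col \<Rightarrow> nat \<Rightarrow> bool" where
  "okv a b c i = (\<not> (mem a i \<and> mem b i) \<and> \<not> (mem b i \<and> mem c i) \<and>
      (\<not> mem b i \<longrightarrow> 1 \<le> cnt a b c i \<and> cnt a b c i \<le> 2))"

definition win :: "col \<Rightarrow> col \<Rightarrow> col \<Rightarrow> bool" where
  "win a b c = (okv a b c 0 \<and> okv a b c 1 \<and> okv a b c 2)"

definition Htab :: "nat \<Rightarrow> col \<Rightarrow> col \<Rightarrow> nat" where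
  "Htab m a b = (if m = 0 then (case a of CE \<Rightarrow> (case b of CE \<Rightarrow> 0 | CT \<Rightarrow> 0 | CM \<Rightarrow> 1 | CB \<Rightarrow> 0 | CTB \<Rightarrow> 2) | CT \<Rightarrow> (case b of CE \<Rightarrow> 0 | CT \<Rightarrow> 0 | CM \<Rightarrow> 1 | CB \<Rightarrow> 1 | CTB \<Rightarrow> 0) | CM \<Rightarrow> (case b of CE \<Rightarrow> 0 | CT \<Rightarrow> 0 | CM \<Rightarrow> 0 | CB \<Rightarrow> 0 | CTB \<Rightarrow> 0) | CB \<Rightarrow> (case b of CE \<Rightarrow> 0 | CT \<Rightarrow> 1 | CM \<Rightarrow> 1 | CB \<Rightarrow> 0 | CTB \<Rightarrow> 0) | CTB \<Rightarrow> (case b of CE \<Rightarrow> 0 | CT \<Rightarrow> 0 | CM \<Rightarrow> 1 | CB \<Rightarrow> 0 | CTB \<Rightarrow> 0)) else if m = 1 then (case a of CE \<Rightarrow> (case b of CE \<Rightarrow> 0 | CT \<Rightarrow> 2 | CM \<Rightarrow> 0 | CB \<Rightarrow> 2 | CTB \<Rightarrow> 0) | CT \<Rightarrow> (case b of CE \<Rightarrow> 0 | CT \<Rightarrow> 0 | CM \<Rightarrow> 0 | CB \<Rightarrow> 2 | CTB \<Rightarrow> 0) | CM \<Rightarrow> (case b of CE \<Rightarrow> 2 | CT \<Rightarrow> 2 | CM \<Rightarrow> 0 | CB \<Rightarrow> 2 | CTB \<Rightarrow> 0) | CB \<Rightarrow> (case b of CE \<Rightarrow> 0 | CT \<Rightarrow>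 2 | CM \<Rightarrow> 0 | CB \<Rightarrow> 0 | CTB \<Rightarrow> 0) | CTB \<Rightarrow> (case b of CE \<Rightarrow> 1 | CT \<Rightarrow> 0 | CM \<Rightarrow> 0 | CB \<Rightarrow> 0 | CTB \<Rightarrow> 0)) else if m = 2 then (case a of CE \<Rightarrow> (case b of CE \<Rightarrow> 0 | CT \<Rightarrow> 3 | CM \<Rightarrow> 3 | CB \<Rightarrow> 3 | CTB \<Rightarrow> 3) | CT \<Rightarrow> (case b of CE \<Rightarrow> 0 | CT \<Rightarrow> 0 | CM \<Rightarrow> 3 | CB \<Rightarrow> 3 | CTB \<Rightarrow> 0) | CM \<Rightarrow> (case b of CE \<Rightarrow> 0 | CT \<Rightarrow> 3 | CM \<Rightarrow> 0 | CB \<Rightarrow> 3 | CTB \<Rightarrow> 0) | CB \<Rightarrow> (case b of CE \<Rightarrow> 0 | CT \<Rightarrow> 3 | CM \<Rightarrow> 3 | CB \<Rightarrow> 0 | CTB \<Rightarrow> 0) | CTB \<Rightarrow> (case b of CE \<Rightarrow> 0 | CT \<Rightarrow> 0 | CM \<Rightarrow> 3 | CB \<Rightarrow> 0 | CTB \<Rightarrow> 0)) else if m = 3 then (case a of CE \<Rightarrow> (case b of CE \<Rightarrow> 0 | CT \<Rightarrow> 4 | CM \<Rightarrow> 4 | CB \<Rightarrow> 4 | CTB \<Rightarrow> 0) | CT \<Rightarrow> (case b of CE \<Rightarrow> 0 | CT \<Rightarrow> 0 | CM \<Rightarrow> 4 | CB \<Rightarrow> 4 | CTB \<Rightarrow>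 0) | CM \<Rightarrow> (case b of CE \<Rightarrow> 3 | CT \<Rightarrow> 4 | CM \<Rightarrow> 0 | CB \<Rightarrow> 4 | CTB \<Rightarrow> 0) | CB \<Rightarrow> (case b of CE \<Rightarrow> 0 | CT \<Rightarrow> 4 | CM \<Rightarrow> 4 | CB \<Rightarrow> 0 | CTB \<Rightarrow> 0) | CTB \<Rightarrow> (case b of CE \<Rightarrow> 3 | CT \<Rightarrow> 0 | CM \<Rightarrow> 0 | CB \<Rightarrow> 0 | CTB \<Rightarrow> 0)) else if m = 4 then (case a of CE \<Rightarrow> (case b of CE \<Rightarrow> 0 | CT \<Rightarrow> 5 | CM \<Rightarrow> 4 | CB \<Rightarrow> 5 | CTB \<Rightarrow> 5) | CT \<Rightarrow> (case b of CE \<Rightarrow> 0 | CT \<Rightarrow> 0 | CM \<Rightarrow> 4 | CB \<Rightarrow> 5 | CTB \<Rightarrow> 0) | CM \<Rightarrow> (case b of CE \<Rightarrow> 0 | CT \<Rightarrow> 5 | CM \<Rightarrow> 0 | CB \<Rightarrow> 5 | CTB \<Rightarrow> 0) | CB \<Rightarrow> (case b of CE \<Rightarrow> 0 | CT \<Rightarrow> 5 | CM \<Rightarrow> 4 | CB \<Rightarrow> 0 | CTB \<Rightarrow> 0) | CTB \<Rightarrow> (case b of CE \<Rightarrow> 4 | CT \<Rightarrow> 0 | CM \<Rightarrow> 4 | CB \<Rightarrow> 0 | CTB \<Rightarrow> 0)) else if m = 5 then (case a of CE \<Rightarrow> (case b of CE \<Rightarrow> 0 | CT \<Rightarrow> 6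 | CM \<Rightarrow> 6 | CB \<Rightarrow> 6 | CTB \<Rightarrow> 6) | CT \<Rightarrow> (case b of CE \<Rightarrow> 0 | CT \<Rightarrow> 0 | CM \<Rightarrow> 6 | CB \<Rightarrow> 5 | CTB \<Rightarrow> 0) | CM \<Rightarrow> (case b of CE \<Rightarrow> 5 | CT \<Rightarrow> 6 | CM \<Rightarrow> 0 | CB \<Rightarrow> 6 | CTB \<Rightarrow> 0) | CB \<Rightarrow> (case b of CE \<Rightarrow> 0 | CT \<Rightarrow> 5 | CM \<Rightarrow> 6 | CB \<Rightarrow> 0 | CTB \<Rightarrow> 0) | CTB \<Rightarrow> (case b of CE \<Rightarrow> 4 | CT \<Rightarrow> 0 | CM \<Rightarrow> 0 | CB \<Rightarrow> 0 | CTB \<Rightarrow> 0)) else if m = 6 then (case a of CE \<Rightarrow> (case b of CE \<Rightarrow> 0 | CT \<Rightarrow> 6 | CM \<Rightarrow> 6 | CB \<Rightarrow> 6 | CTB \<Rightarrow> 6) | CT \<Rightarrow> (case b of CE \<Rightarrow> 0 | CT \<Rightarrow> 0 | CM \<Rightarrow> 6 | CB \<Rightarrow> 6 | CTB \<Rightarrow> 0) | CM \<Rightarrow> (case b of CE \<Rightarrow> 6 | CT \<Rightarrow> 6 | CM \<Rightarrow> 0 | CB \<Rightarrow> 6 | CTB \<Rightarrow> 0) | CB \<Rightarrow> (case b of CE \<Rightarrow> 0 | CT \<Rightarrow> 6 | CM \<Rightarrow> 6 | CB \<Rightarrow> 0 | CTB \<Rightarrow> 0) | CTB \<Rightarrow>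 (case b of CE \<Rightarrow> 6 | CT \<Rightarrow> 0 | CM \<Rightarrow> 6 | CB \<Rightarrow> 0 | CTB \<Rightarrow> 0)) else if m = 7 then (case a of CE \<Rightarrow> (case b of CE \<Rightarrow> 0 | CT \<Rightarrow> 7 | CM \<Rightarrow> 7 | CB \<Rightarrow> 7 | CTB \<Rightarrow> 8) | CT \<Rightarrow> (case b of CE \<Rightarrow> 0 | CT \<Rightarrow> 0 | CM \<Rightarrow> 7 | CB \<Rightarrow> 7 | CTB \<Rightarrow> 0) | CM \<Rightarrow> (case b of CE \<Rightarrow> 6 | CT \<Rightarrow> 7 | CM \<Rightarrow> 0 | CB \<Rightarrow> 7 | CTB \<Rightarrow> 0) | CB \<Rightarrow> (case b of CE \<Rightarrow> 0 | CT \<Rightarrow> 7 | CM \<Rightarrow> 7 | CB \<Rightarrow> 0 | CTB \<Rightarrow> 0) | CTB \<Rightarrow> (case b of CE \<Rightarrow> 6 | CT \<Rightarrow> 0 | CM \<Rightarrow> 7 | CB \<Rightarrow> 0 | CTB \<Rightarrow> 0)) else 0)"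

definition Ptab :: "nat \<Rightarrow> col \<Rightarrow> col \<Rightarrow> nat" where
  "Ptab r a b = (if r = 0 then (case a of CE \<Rightarrow> (case b of CE \<Rightarrow> 0 | CT \<Rightarrow> 2 | CM \<Rightarrow> 1 | CB \<Rightarrow> 2 | CTB \<Rightarrow> 2) | CT \<Rightarrow> (case b of CE \<Rightarrow> 0 | CT \<Rightarrow> 0 | CM \<Rightarrow> 1 | CB \<Rightarrow> 2 | CTB \<Rightarrow> 0) | CM \<Rightarrow> (case b of CE \<Rightarrow> 2 | CT \<Rightarrow> 2 | CM \<Rightarrow> 0 | CB \<Rightarrow> 2 | CTB \<Rightarrow> 0) | CB \<Rightarrow> (case b of CE \<Rightarrow> 0 | CT \<Rightarrow> 2 | CM \<Rightarrow> 1 | CB \<Rightarrow> 0 | CTB \<Rightarrow> 0) | CTB \<Rightarrow> (case b of CE \<Rightarrow> 1 | CT \<Rightarrow> 0 | CM \<Rightarrow> 1 | CB \<Rightarrow> 0 | CTB \<Rightarrow> 0)) else if r = 1 then (case a of CE \<Rightarrow> (case b of CE \<Rightarrow> 0 | CT \<Rightarrow> 3 | CM \<Rightarrow> 3 | CB \<Rightarrow> 3 | CTB \<Rightarrow> 3) | CT \<Rightarrow> (case b of CE \<Rightarrow> 0 | CT \<Rightarrow> 0 | CM \<Rightarrow> 3 | CB \<Rightarrow> 2 | CTB \<Rightarrow> 0) | CM \<Rightarrow> (case b of CE \<Rightarrow> 2 | CT \<Rightarrow> 3 | CM \<Rightarrow> 0 | CB \<Rightarrow> 3 | CTB \<Rightarrow>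 0) | CB \<Rightarrow> (case b of CE \<Rightarrow> 0 | CT \<Rightarrow> 2 | CM \<Rightarrow> 3 | CB \<Rightarrow> 0 | CTB \<Rightarrow> 0) | CTB \<Rightarrow> (case b of CE \<Rightarrow> 1 | CT \<Rightarrow> 0 | CM \<Rightarrow> 3 | CB \<Rightarrow> 0 | CTB \<Rightarrow> 0)) else if r = 2 then (case a of CE \<Rightarrow> (case b of CE \<Rightarrow> 0 | CT \<Rightarrow> 3 | CM \<Rightarrow> 3 | CB \<Rightarrow> 3 | CTB \<Rightarrow> 3) | CT \<Rightarrow> (case b of CE \<Rightarrow> 0 | CT \<Rightarrow> 0 | CM \<Rightarrow> 3 | CB \<Rightarrow> 3 | CTB \<Rightarrow> 0) | CM \<Rightarrow> (case b of CE \<Rightarrow> 3 | CT \<Rightarrow> 3 | CM \<Rightarrow> 0 | CB \<Rightarrow> 3 | CTB \<Rightarrow> 0) | CB \<Rightarrow> (case b of CE \<Rightarrow> 0 | CT \<Rightarrow> 3 | CM \<Rightarrow> 3 | CB \<Rightarrow> 0 | CTB \<Rightarrow> 0) | CTB \<Rightarrow> (case b of CE \<Rightarrow> 3 | CT \<Rightarrow> 0 | CM \<Rightarrow> 3 | CB \<Rightarrow> 0 | CTB \<Rightarrow> 0)) else (case a of CE \<Rightarrow> (case b of CE \<Rightarrow> 0 | CT \<Rightarrow> 4 | CM \<Rightarrow> 4 | CB \<Rightarrow> 4 | CTB \<Rightarrow> 5) | CT \<Rightarrow> (case b of CE \<Rightarrow> 0 | CT \<Rightarrow> 0 | CM \<Rightarrow>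 4 | CB \<Rightarrow> 4 | CTB \<Rightarrow> 0) | CM \<Rightarrow> (case b of CE \<Rightarrow> 3 | CT \<Rightarrow> 4 | CM \<Rightarrow> 0 | CB \<Rightarrow> 4 | CTB \<Rightarrow> 0) | CB \<Rightarrow> (case b of CE \<Rightarrow> 0 | CT \<Rightarrow> 4 | CM \<Rightarrow> 4 | CB \<Rightarrow> 0 | CTB \<Rightarrow> 0) | CTB \<Rightarrow> (case b of CE \<Rightarrow> 3 | CT \<Rightarrow> 0 | CM \<Rightarrow> 4 | CB \<Rightarrow> 0 | CTB \<Rightarrow> 0)))"

definition Rtab :: "nat \<Rightarrow> col \<Rightarrow> col \<Rightarrow> bool" where
  "Rtab m a b = (if m = 0 then (case a of CE \<Rightarrow> (case b of CE \<Rightarrow> False | CT \<Rightarrow> False | CM \<Rightarrow> True | CB \<Rightarrow> False | CTB \<Rightarrow> True) | CT \<Rightarrow> (case b of CE \<Rightarrow> False | CT \<Rightarrow> False | CM \<Rightarrow> True | CB \<Rightarrow> True | CTB \<Rightarrow> False) | CM \<Rightarrow> (case b of CE \<Rightarrow> False | CT \<Rightarrow> False | CM \<Rightarrow> False | CB \<Rightarrow> False | CTB \<Rightarrow> False) | CB \<Rightarrow> (case b of CE \<Rightarrow> False | CT \<Rightarrow> True | CM \<Rightarrow> True | CB \<Rightarrow> False | CTB \<Rightarrow> False) | CTB \<Rightarrow> (case b of CE \<Rightarrow> False | CT \<Rightarrow> False | CM \<Rightarrow> True | CB \<Rightarrow> False | CTB \<Rightarrow> False)) else if m = 1 then (case a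 of CE \<Rightarrow> (case b of CE \<Rightarrow> False | CT \<Rightarrow> True | CM \<Rightarrow> False | CB \<Rightarrow> True | CTB \<Rightarrow> False) | CT \<Rightarrow> (case b of CE \<Rightarrow> False | CT \<Rightarrow> False | CM \<Rightarrow> False | CB \<Rightarrow> True | CTB \<Rightarrow> False) | CM \<Rightarrow> (case b of CE \<Rightarrow> True | CT \<Rightarrow> True | CM \<Rightarrow> False | CB \<Rightarrow> True | CTB \<Rightarrow> False) | CB \<Rightarrow> (case b of CE \<Rightarrow> False | CT \<Rightarrow> True | CM \<Rightarrow> False | CB \<Rightarrow> False | CTB \<Rightarrow> False) | CTB \<Rightarrow> (case b of CE \<Rightarrow> True | CT \<Rightarrow> False | CM \<Rightarrow> False | CB \<Rightarrow> False | CTB \<Rightarrow> False)) else if m = 2 then (case a of CE \<Rightarrow> (case b of CE \<Rightarrow> False | CT \<Rightarrow> True | CM \<Rightarrow> True | CB \<Rightarrow> True | CTB \<Rightarrow> True) | CT \<Rightarrow> (case b of CE \<Rightarrow> False | CT \<Rightarrow> False | CM \<Rightarrow> True | CB \<Rightarrow> True | CTB \<Rightarrow> False) | CM \<Rightarrow> (case b of CE \<Rightarrow> False | CT \<Rightarrow> True | CM \<Rightarrow> False | CB \<Rightarrow> True | CTB \<Rightarrow> False) | CB \<Rightarrow> (case b of CE \<Rightarrow> False | CT \<Rightarrow> True | CM \<Rightarrow> True | CB \<Rightarrow> False | CTB \<Rightarrow> False) | CTB \<Rightarrow> (case b of CE \<Rightarrow> False | CT \<Rightarrow> False | CM \<Rightarrow>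 True | CB \<Rightarrow> False | CTB \<Rightarrow> False)) else if m = 3 then (case a of CE \<Rightarrow> (case b of CE \<Rightarrow> False | CT \<Rightarrow> True | CM \<Rightarrow> True | CB \<Rightarrow> True | CTB \<Rightarrow> False) | CT \<Rightarrow> (case b of CE \<Rightarrow> False | CT \<Rightarrow> False | CM \<Rightarrow> True | CB \<Rightarrow> True | CTB \<Rightarrow> False) | CM \<Rightarrow> (case b of CE \<Rightarrow> True | CT \<Rightarrow> True | CM \<Rightarrow> False | CB \<Rightarrow> True | CTB \<Rightarrow> False) | CB \<Rightarrow> (case b of CE \<Rightarrow> False | CT \<Rightarrow> True | CM \<Rightarrow> True | CB \<Rightarrow> False | CTB \<Rightarrow> False) | CTB \<Rightarrow> (case b of CE \<Rightarrow> True | CT \<Rightarrow> False | CM \<Rightarrow> False | CB \<Rightarrow> False | CTB \<Rightarrow> False)) else if m = 4 then (case a of CE \<Rightarrow> (case b of CE \<Rightarrow> False | CT \<Rightarrow> True | CM \<Rightarrow> True | CB \<Rightarrow> True | CTB \<Rightarrow> True) | CT \<Rightarrow> (case b of CE \<Rightarrow> False | CT \<Rightarrow> False | CM \<Rightarrow> True | CB \<Rightarrow> True | CTB \<Rightarrow> False) | CM \<Rightarrow> (case b of CE \<Rightarrow> False | CT \<Rightarrow> True | CM \<Rightarrow> False | CB \<Rightarrow> True | CTB \<Rightarrow> False) | CB \<Rightarrow> (case b of CE \<Rightarrow> False | CT \<Rightarrow> True | CM \<Rightarrow> True | CB \<Rightarrow> False | CTB \<Rightarrow> False) | CTB \<Rightarrow>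 (case b of CE \<Rightarrow> True | CT \<Rightarrow> False | CM \<Rightarrow> True | CB \<Rightarrow> False | CTB \<Rightarrow> False)) else if m = 5 then (case a of CE \<Rightarrow> (case b of CE \<Rightarrow> False | CT \<Rightarrow> True | CM \<Rightarrow> True | CB \<Rightarrow> True | CTB \<Rightarrow> True) | CT \<Rightarrow> (case b of CE \<Rightarrow> False | CT \<Rightarrow> False | CM \<Rightarrow> True | CB \<Rightarrow> True | CTB \<Rightarrow> False) | CM \<Rightarrow> (case b of CE \<Rightarrow> True | CT \<Rightarrow> True | CM \<Rightarrow> False | CB \<Rightarrow> True | CTB \<Rightarrow> False) | CB \<Rightarrow> (case b of CE \<Rightarrow> False | CT \<Rightarrow> True | CM \<Rightarrow> True | CB \<Rightarrow> False | CTB \<Rightarrow> False) | CTB \<Rightarrow> (case b of CE \<Rightarrow> True | CT \<Rightarrow> False | CM \<Rightarrow> False | CB \<Rightarrow> False | CTB \<Rightarrow> False)) else if m = 6 then (case a of CE \<Rightarrow> (case b of CE \<Rightarrow> False | CT \<Rightarrow> True | CM \<Rightarrow> True | CB \<Rightarrow> True | CTB \<Rightarrow> True) | CT \<Rightarrow> (case b of CE \<Rightarrow> False | CT \<Rightarrow> False | CM \<Rightarrow> True | CB \<Rightarrow> True | CTB \<Rightarrow> False) | CM \<Rightarrow> (case b of CE \<Rightarrow> True | CT \<Rightarrow> True | CM \<Rightarrow> False | CB \<Rightarrow> True | CTB \<Rightarrow> False) | CB \<Rightarrow> (case b of CE \<Rightarrow> False | CT \<Rightarrow> True | CM \<Rightarrow>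 True | CB \<Rightarrow> False | CTB \<Rightarrow> False) | CTB \<Rightarrow> (case b of CE \<Rightarrow> True | CT \<Rightarrow> False | CM \<Rightarrow> True | CB \<Rightarrow> False | CTB \<Rightarrow> False)) else if m = 7 then (case a of CE \<Rightarrow> (case b of CE \<Rightarrow> False | CT \<Rightarrow> True | CM \<Rightarrow> True | CB \<Rightarrow> True | CTB \<Rightarrow> True) | CT \<Rightarrow> (case b of CE \<Rightarrow> False | CT \<Rightarrow> False | CM \<Rightarrow> True | CB \<Rightarrow> True | CTB \<Rightarrow> False) | CM \<Rightarrow> (case b of CE \<Rightarrow> True | CT \<Rightarrow> True | CM \<Rightarrow> False | CB \<Rightarrow> True | CTB \<Rightarrow> False) | CB \<Rightarrow> (case b of CE \<Rightarrow> False | CT \<Rightarrow> True | CM \<Rightarrow> True | CB \<Rightarrow> False | CTB \<Rightarrow> False) | CTB \<Rightarrow> (case b of CE \<Rightarrow> True | CT \<Rightarrow> False | CM \<Rightarrow> True | CB \<Rightarrow> False | CTB \<Rightarrow> False)) else False)"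

definition Qtab :: "nat \<Rightarrow> col \<Rightarrow> col \<Rightarrow> bool" where
  "Qtab r a b = (if r = 0 then (case a of CE \<Rightarrow> (case b of CE \<Rightarrow> False | CT \<Rightarrow> True | CM \<Rightarrow> True | CB \<Rightarrow> True | CTB \<Rightarrow> True) | CT \<Rightarrow> (case b of CE \<Rightarrow> False | CT \<Rightarrow> False | CM \<Rightarrow> True | CB \<Rightarrow> True | CTB \<Rightarrow> False) | CM \<Rightarrow> (case b of CE \<Rightarrow> True | CT \<Rightarrow> True | CM \<Rightarrow> False | CB \<Rightarrow> True | CTB \<Rightarrow> False) | CB \<Rightarrow> (case b of CE \<Rightarrow> False | CT \<Rightarrow> True | CM \<Rightarrow> True | CB \<Rightarrow> False | CTB \<Rightarrow> False) | CTB \<Rightarrow> (case b of CE \<Rightarrow> True | CT \<Rightarrow> False | CM \<Rightarrow> True | CB \<Rightarrow> False | CTB \<Rightarrow> False)) else if r = 1 then (case a of CE \<Rightarrow> (case b of CE \<Rightarrow> False | CT \<Rightarrow> True | CM \<Rightarrow> True | CB \<Rightarrow> True | CTB \<Rightarrow> True) | CT \<Rightarrow> (case b of CE \<Rightarrow> False | CT \<Rightarrow> False | CM \<Rightarrow> True | CB \<Rightarrow> True | CTB \<Rightarrow> False) | CM \<Rightarrow> (case b of CE \<Rightarrow> True | CT \<Rightarrow> True | CM \<Rightarrow> False | CB \<Rightarrow> True | CTB \<Rightarrow> False) | CB \<Rightarrow> (case b of CE \<Rightarrow> False | CT \<Rightarrow> True | CM \<Rightarrow> True | CB \<Rightarrow>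 False | CTB \<Rightarrow> False) | CTB \<Rightarrow> (case b of CE \<Rightarrow> True | CT \<Rightarrow> False | CM \<Rightarrow> True | CB \<Rightarrow> False | CTB \<Rightarrow> False)) else if r = 2 then (case a of CE \<Rightarrow> (case b of CE \<Rightarrow> False | CT \<Rightarrow> True | CM \<Rightarrow> True | CB \<Rightarrow> True | CTB \<Rightarrow> True) | CT \<Rightarrow> (case b of CE \<Rightarrow> False | CT \<Rightarrow> False | CM \<Rightarrow> True | CB \<Rightarrow> True | CTB \<Rightarrow> False) | CM \<Rightarrow> (case b of CE \<Rightarrow> True | CT \<Rightarrow> True | CM \<Rightarrow> False | CB \<Rightarrow> True | CTB \<Rightarrow> False) | CB \<Rightarrow> (case b of CE \<Rightarrow> False | CT \<Rightarrow> True | CM \<Rightarrow> True | CB \<Rightarrow> False | CTB \<Rightarrow> False) | CTB \<Rightarrow> (case b of CE \<Rightarrow> True | CT \<Rightarrow> False | CM \<Rightarrow> True | CB \<Rightarrow> False | CTB \<Rightarrow> False)) else (case a of CE \<Rightarrow> (case b of CE \<Rightarrow> False | CT \<Rightarrow> True | CM \<Rightarrow> True | CB \<Rightarrow> True | CTB \<Rightarrow> True) | CT \<Rightarrow> (case b of CE \<Rightarrow> False | CT \<Rightarrow> False | CM \<Rightarrow> True | CB \<Rightarrow> True | CTB \<Rightarrow> False) | CM \<Rightarrow> (case b of CE \<Rightarrow> True | CT \<Rightarrow> True | CM \<Rightarrow> False | CB \<Rightarrow> True | CTB \<Rightarrow> False) | CB \<Rightarrow> (case b of CE \<Rightarrow>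 False | CT \<Rightarrow> True | CM \<Rightarrow> True | CB \<Rightarrow> False | CTB \<Rightarrow> False) | CTB \<Rightarrow> (case b of CE \<Rightarrow> True | CT \<Rightarrow> False | CM \<Rightarrow> True | CB \<Rightarrow> False | CTB \<Rightarrow> False)))"

definition H :: "nat \<Rightarrow> col \<Rightarrow> col \<Rightarrow> nat" where
  "H m a b = (if m < 8 then Htab m a b else Ptab (m mod 4) a b + 3 * (m div 4))"

definition R :: "nat \<Rightarrow> col \<Rightarrow> col \<Rightarrow> bool" where
  "R m a b = (if m < 8 then Rtab m a b else Qtab (m mod 4) a b)"

lemma base_step: "win a b CE \<Longrightarrow> R 0 a b \<and> H 0 a b \<le> w b"
  by (cases a; cases b) (simp_all add: win_def okv_def cnt_def H_def R_def Htab_def Rtab_def)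

lemma small_step:
  assumes "win a b c" "Rtab m b c" "m < 7"
  shows "Rtab (Suc m) a b \<and> Htab (Suc m) a b \<le> w b + Htab m b c"
proof -
  have "m = 0 \<or> m = 1 \<or> m = 2 \<or> m = 3 \<or> m = 4 \<or> m = 5 \<or> m = 6" using assms(3) by auto
  then show ?thesis using assms(1,2)
    by (elim disjE; cases a; cases b; cases c) (simp_all add: win_def okv_def cnt_def Htab_def Rtab_def)
qed

lemma per_step7: "win a b c \<Longrightarrow> Rtab 7 b c \<Longrightarrow> Qtab 0 a b \<and> Ptab 0 a b + 6 \<le> w b + Htab 7 b c"
  apply (cases a; cases b; cases c)
  apply (simp_all add: win_def okv_def cnt_def)
  apply (simp_all add: Htab_def Rtab_def Ptab_def Qtab_def)
  done

lemma per_stepr: "win a b c \<Longrightarrow> Qtab r b c \<Longrightarrow> r < 3 \<Longrightarrow> Qtab (Suc r) a b \<and> Ptab (Suc r) a b \<le> w b + Ptab r b c"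
proof -
  assume "r < 3" "win a b c" "Qtab r b c"
  then have "r = 0 \<or> r = 1 \<or> r = 2" by auto
  then show ?thesis using \<open>win a b c\<close> \<open>Qtab r b c\<close>
    apply (elim disjE; cases a; cases b; cases c)
    apply (simp_all add: win_def okv_def cnt_def)
    apply (simp_all add: Ptab_def Qtab_def)
    done
qed

lemma per_step3: "win a b c \<Longrightarrow> Qtab 3 b c \<Longrightarrow> Qtab 0 a b \<and> Ptab 0 a b + 3 \<le> w b + Ptab 3 b c"
  apply (cases a; cases b; cases c)
  apply (simp_all add: win_def okv_def cnt_def)
  apply (simp_all add: Ptab_def Qtab_def)
  done

lemma trans_step:
  assumes "win a b c" "R m b c"
  shows "R (Suc m) a b \<and> H (Suc m) a b \<le> w b + H m b c"
proof (cases "m < 7")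
  case True
  then show ?thesis using small_step[OF assms(1), of m] assms(2) by (simp add: R_def H_def)
next
  case False
  show ?thesis
  proof (cases "m = 7")
    case True
    then show ?thesis using per_step7[OF assms(1)] assms(2) by (simp add: R_def H_def)
  next
    case False
    then have m8: "m \<ge> 8" using \<open>\<not> m < 7\<close> by auto
    have q: "m div 4 \<ge> 2" using m8 by auto
    show ?thesis
    proof (cases "m mod 4 = 3")
      case True
      have e1: "Suc m mod 4 = 0" using True by presburger
      have e2: "Suc m div 4 = m div 4 + 1" using True by presburger
      show ?thesis using per_step3[OF assms(1)] assms(2) True e1 e2 m8 q by (simp add: R_def H_def)
    next
      case False
      have e1: "Suc m mod 4 = Suc (m mod 4)" using False by presburger
      have e2: "Suc m div 4 = m div 4" using False by presburger
      have "m mod 4 < 3" using False by auto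
      then show ?thesis using per_stepr[OF assms(1), of "m mod 4"] assms(2) e1 e2 m8 q by (simp add: R_def H_def)
    qed
  qed
qed

lemma ptab_low: "Qtab r CE b \<Longrightarrow> r < 4 \<Longrightarrow> (if r = 0 then 1 else if r = 3 then 4 else 3) \<le> Ptab r CE b"
proof -
  assume "Qtab r CE b" "r < 4"
  then have "r = 0 \<or> r = 1 \<or> r = 2 \<or> r = 3" by auto
  then show ?thesis using \<open>Qtab r CE b\<close>
    by (elim disjE; cases b) (simp_all add: Ptab_def Qtab_def)
qed

lemma htab_low: "Rtab m CE b \<Longrightarrow> 2 \<le> m \<Longrightarrow> m < 8 \<Longrightarrow>
   (if m mod 4 = 1 then (3 * m + 11) div 4 else (3 * m + 7) div 4) \<le> Htab m CE b"
proof -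
  assume "Rtab m CE b" "2 \<le> m" "m < 8"
  then have "m = 2 \<or> m = 3 \<or> m = 4 \<or> m = 5 \<or> m = 6 \<or> m = 7" by auto
  then show ?thesis using \<open>Rtab m CE b\<close>
    by (elim disjE; cases b) (simp_all add: Htab_def Rtab_def)
qed

lemma arith_aux: "(if m mod 4 = 1 then (3 * m + 11) div 4 else (3 * m + 7) div 4) \<le> (if m mod 4 = 0 then 1 else if m mod 4 = 3 then 4 else 3) + 3 * (m div (4::nat))"
proof -
  obtain q r where m: "m = 4 * q + r" and r: "r < 4" using mod_less_divisor[of 4 m] div_mult_mod_eq[of m 4]
    by (metis mult.commute zero_less_numeral)
  have mm: "m mod 4 = r" "m div 4 = q" using m r by auto
  have "r = 0 \<or> r = 1 \<or> r = 2 \<or> r = 3" using r by auto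
  then show ?thesis unfolding mm unfolding m by (elim disjE) simp_all
qed
lemma f_aux: "n = Suc m \<Longrightarrow> (if n mod 4 = 2 then (3 * n + 8) div 4 else (3 * n + 4) div 4) =
           (if m mod 4 = 1 then (3 * m + 11) div 4 else (3 * (m::nat) + 7) div 4)"
proof -
  assume n: "n = Suc m"
  have "n mod 4 = 2 \<longleftrightarrow> m mod 4 = 1" unfolding n by (simp add: mod_Suc)
  moreover have "3 * n + 8 = 3 * m + 11" "3 * n + 4 = 3 * m + 7" using n by auto
  ultimately show ?thesis by (simp add: ac_simps)
qed
lemma final_bound:
  assumes "n \<ge> 3" "R (n - 1) CE b"
  shows "(if n mod 4 = 2 then (3 * n + 8) div 4 else (3 * n + 4) div 4) \<le> H (n - 1) CE b"
proof -
  define m where "m = n - 1"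
  have n: "n = Suc m" using m_def assms(1) by auto
  have f: "(if n mod 4 = 2 then (3 * n + 8) div 4 else (3 * n + 4) div 4) =
           (if m mod 4 = 1 then (3 * m + 11) div 4 else (3 * m + 7) div 4)" using f_aux[OF n] .
  have m2: "2 \<le> m" using n assms(1) by auto
  show ?thesis
  proof (cases "m < 8")
    case True
    have "Rtab m CE b" using assms(2) True unfolding m_def[symmetric] by (simp add: R_def)
    then show ?thesis using htab_low[OF _ m2 True] True unfolding f m_def[symmetric]
      by (simp add: H_def)
  next
    case False
    have r: "m mod 4 < 4" by auto
    have l: "(if m mod 4 = 0 then 1 else if m mod 4 = 3 then 4 else 3) \<le> Ptab (m mod 4) CE b"
      using ptab_low[OF _ r] assms(2) False unfolding m_def[symmetric] by (simp add: R_def)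
    then show ?thesis using arith_aux[of m] False unfolding f m_def[symmetric] by (simp add: H_def)
  qed
qed

lemma LB:
  "\<forall>k a. Suc (k + d) = n \<longrightarrow>
     (\<forall>j. k \<le> j \<and> j < n \<longrightarrow> win (if j = k then a else f (j - 1)) (f j) (if Suc j < n then f (Suc j) else CE)) \<longrightarrow>
     R d a (f k) \<and> H d a (f k) \<le> (\<Sum>j=k..<n. w (f j))"
proof (induction d)
  case 0
  show ?case
  proof (intro allI impI)
    fix k a
    assume k: "Suc (k + 0) = n" and h: "\<forall>j. k \<le> j \<and> j < n \<longrightarrow> win (if j = k then a else f (j - 1)) (f j) (if Suc j < n then f (Suc j) else CE)"
    have "win a (f k) CE" using h[rule_format, of k] k by simp
    from base_step[OF this] show "R 0 a (f k) \<and> H 0 a (f k) \<le> (\<Sum>j=k..<n. w (f j))" using k by (simp add: k[symmetric])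
  qed
next
  case (Suc d)
  show ?case
  proof (intro allI impI)
    fix k a
    assume k: "Suc (k + Suc d) = n" and h: "\<forall>j. k \<le> j \<and> j < n \<longrightarrow> win (if j = k then a else f (j - 1)) (f j) (if Suc j < n then f (Suc j) else CE)"
    have h2: "\<forall>j. Suc k \<le> j \<and> j < n \<longrightarrow> win (if j = Suc k then f k else f (j - 1)) (f j) (if Suc j < n then f (Suc j) else CE)"
    proof (intro allI impI)
      fix j assume "Suc k \<le> j \<and> j < n"
      then show "win (if j = Suc k then f k else f (j - 1)) (f j) (if Suc j < n then f (Suc j) else CE)"
        using h[rule_format, of j] by (cases "j = Suc k") auto
    qed
    have IH: "R d (f k) (f (Suc k)) \<and> H d (f k) (f (Suc k)) \<le> (\<Sum>j=Suc k..<n. w (f j))"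
      using Suc.IH[rule_format, of "Suc k" "f k"] k h2 by simp
    have wk: "win a (f k) (f (Suc k))" using h[rule_format, of k] k by simp
    have s: "(\<Sum>j=k..<n. w (f j)) = w (f k) + (\<Sum>j=Suc k..<n. w (f j))"
      using k by (simp add: sum.atLeast_Suc_lessThan)
    show "R (Suc d) a (f k) \<and> H (Suc d) a (f k) \<le> (\<Sum>j=k..<n. w (f j))"
      using trans_step[OF wk, of d] IH s by linarith
  qed
qed

lemma win_all: "win a b c \<longleftrightarrow> (\<forall>i<3. okv a b c i)"
proof
  assume "win a b c" then show "\<forall>i<3. okv a b c i"
    unfolding win_def by (auto simp: less_Suc_eq numeral_2_eq_2 numeral_3_eq_3)
next
  assume "\<forall>i<3. okv a b c i" then show "win a b c" unfolding win_def by auto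
qed

lemma mem_lt3: "mem c i \<Longrightarrow> i < 3" by (cases c) auto
lemma mem_nadj: "mem c i \<Longrightarrow> \<not> mem c (Suc i)" by (cases c) auto

definition Sf :: "(nat \<Rightarrow> col) \<Rightarrow> nat \<Rightarrow> (nat \<times> nat) set" where
  "Sf f n = {(i, j). i < 3 \<and> j < n \<and> mem (f j) i}"

lemma Sf_sub: "Sf f n \<subseteq> grid_vertices 3 n"
  by (auto simp: Sf_def grid_vertices_def)

lemma Sf_fin: "finite (Sf f n)"
  by (rule finite_subset[OF Sf_sub]) (simp add: grid_vertices_def)

lemma mem_Sf: "(i, j) \<in> Sf f n \<longleftrightarrow> j < n \<and> mem (f j) i"
  by (auto simp: Sf_def dest: mem_lt3)

lemma adj_iff: "grid_adj (i, j) u \<longleftrightarrow> u = (i, Suc j) \<or> (0 < j \<and> u = (i, j - 1)) \<or> u = (Suc i, j) \<or> (0 < i \<and> u = (i - 1, j))"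
  by (cases u) (auto simp: grid_adj_def)

lemma card_filter_sum: "finite N \<Longrightarrow> card {u \<in> S. u \<in> N} = (\<Sum>u\<in>N. if u \<in> S then 1 else 0)"
proof -
  assume "finite N"
  have "{u \<in> S. u \<in> N} = N \<inter> S" by auto
  then show ?thesis using \<open>finite N\<close> by (simp add: sum.inter_restrict[symmetric])
qed

lemma card_nbr:
  "card {u \<in> S. grid_adj (i, j) u} =
     of_bool ((i, Suc j) \<in> S) + of_bool (0 < j \<and> (i, j - 1) \<in> S) + of_bool ((Suc i, j) \<in> S) + of_bool (0 < i \<and> (i - 1, j) \<in> S)"
proof -
  define N where "N = {(i, Suc j), (Suc i, j)} \<union> (if 0 < j then {(i, j - 1)} else {}) \<union> (if 0 < i then {(i - 1, j)} else {})"
  have e: "{u \<in> S. grid_adj (i, j) u} = {u \<in> S. u \<in> N}"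
    unfolding adj_iff N_def by auto
  have fin: "finite N" unfolding N_def by auto
  show ?thesis unfolding e card_filter_sum[OF fin] unfolding N_def
    by (cases "i = 0"; cases "j = 0") auto
qed

definition Lc :: "(nat \<Rightarrow> col) \<Rightarrow> nat \<Rightarrow> col" where
  "Lc f j = (if j = 0 then CE else f (j - 1))"
definition Rc :: "(nat \<Rightarrow> col) \<Rightarrow> nat \<Rightarrow> nat \<Rightarrow> col" where
  "Rc f n j = (if Suc j < n then f (Suc j) else CE)"

lemma card_nbr_Sf:
  assumes "i < 3" "j < n"
  shows "card {u \<in> Sf f n. grid_adj (i, j) u} = cnt (Lc f j) (f j) (Rc f n j) i"
  unfolding card_nbr mem_Sf cnt_def Lc_def Rc_def using assms by auto

lemma char:
  "indep_12_set (grid_vertices 3 n) grid_adj (Sf f n) \<longleftrightarrow> (\<forall>j<n. win (Lc f j) (f j) (Rc f n j))"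
proof
  assume H: "indep_12_set (grid_vertices 3 n) grid_adj (Sf f n)"
  then have ind: "\<And>u v. u \<in> Sf f n \<Longrightarrow> v \<in> Sf f n \<Longrightarrow> \<not> grid_adj u v"
    and cd: "\<And>v. v \<in> grid_vertices 3 n - Sf f n \<Longrightarrow> 1 \<le> card {u \<in> Sf f n. grid_adj v u} \<and> card {u \<in> Sf f n. grid_adj v u} \<le> 2"
    unfolding indep_12_set_def independent_set_def by blast+
  show "\<forall>j<n. win (Lc f j) (f j) (Rc f n j)"
  proof (intro allI impI)
    fix j assume j: "j < n"
    show "win (Lc f j) (f j) (Rc f n j)" unfolding win_all
    proof (intro allI impI)
      fix i :: nat assume i: "i < 3"
      have a1: "\<not> (mem (Lc f j) i \<and> mem (f j) i)"
      proof
        assume "mem (Lc f j) i \<and> mem (f j) i"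
        then have "0 < j" "mem (f (j - 1)) i" "mem (f j) i" by (auto simp: Lc_def split: if_splits)
        then have "(i, j - 1) \<in> Sf f n" "(i, j) \<in> Sf f n" using j by (auto simp: mem_Sf)
        then show False using ind \<open>0 < j\<close> by (force simp: grid_adj_def)
      qed
      have a2: "\<not> (mem (f j) i \<and> mem (Rc f n j) i)"
      proof
        assume "mem (f j) i \<and> mem (Rc f n j) i"
        then have "Suc j < n" "mem (f (Suc j)) i" "mem (f j) i" by (auto simp: Rc_def split: if_splits)
        then have "(i, Suc j) \<in> Sf f n" "(i, j) \<in> Sf f n" using j by (auto simp: mem_Sf)
        then show False using ind by (force simp: grid_adj_def)
      qed
      have a3: "\<not> mem (f j) i \<longrightarrow> 1 \<le> cnt (Lc f j) (f j) (Rc f n j) i \<and> cnt (Lc f j) (f j) (Rc f n j) i \<le> 2"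
      proof
        assume "\<not> mem (f j) i"
        then have "(i, j) \<in> grid_vertices 3 n - Sf f n" using i j by (auto simp: mem_Sf grid_vertices_def)
        from cd[OF this] show "1 \<le> cnt (Lc f j) (f j) (Rc f n j) i \<and> cnt (Lc f j) (f j) (Rc f n j) i \<le> 2"
          using card_nbr_Sf[OF i j] by simp
      qed
      show "okv (Lc f j) (f j) (Rc f n j) i" unfolding okv_def using a1 a2 a3 by blast
    qed
  qed
next
  assume W: "\<forall>j<n. win (Lc f j) (f j) (Rc f n j)"
  have W': "\<And>i j. i < 3 \<Longrightarrow> j < n \<Longrightarrow> okv (Lc f j) (f j) (Rc f n j) i"
    using W win_all by blast
  have ind: "\<forall>u\<in>Sf f n. \<forall>v\<in>Sf f n. \<not> grid_adj u v"
  proof (intro ballI)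
    fix u v assume u: "u \<in> Sf f n" and v: "v \<in> Sf f n"
    obtain i j where uu: "u = (i, j)" by (cases u)
    obtain i' j' where vv: "v = (i', j')" by (cases v)
    have mu: "j < n" "mem (f j) i" "i < 3" using u uu by (auto simp: mem_Sf dest: mem_lt3)
    have mv: "j' < n" "mem (f j') i'" "i' < 3" using v vv by (auto simp: mem_Sf dest: mem_lt3)
    show "\<not> grid_adj u v"
    proof
      assume "grid_adj u v"
      then consider "i = i'" "j = Suc j'" | "i = i'" "j' = Suc j" | "j = j'" "i = Suc i'" | "j = j'" "i' = Suc i"
        unfolding uu vv grid_adj_def by auto
      then show False
      proof cases
        case 1
        have "okv (Lc f j') (f j') (Rc f n j') i" using W' mu mv 1 by auto
        then show False using mu mv 1 by (auto simp: okv_def Rc_def)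
      next
        case 2
        have "okv (Lc f j) (f j) (Rc f n j) i" using W' mu mv 2 by auto
        then show False using mu mv 2 by (auto simp: okv_def Rc_def)
      next
        case 3 then show False using mu mv mem_nadj by auto
      next
        case 4 then show False using mu mv mem_nadj by auto
      qed
    qed
  qed
  have cd: "\<forall>v\<in>grid_vertices 3 n - Sf f n. 1 \<le> card {u \<in> Sf f n. grid_adj v u} \<and> card {u \<in> Sf f n. grid_adj v u} \<le> 2"
  proof
    fix v assume v: "v \<in> grid_vertices 3 n - Sf f n"
    obtain i j where vv: "v = (i, j)" by (cases v)
    have ij: "i < 3" "j < n" "\<not> mem (f j) i" using v vv by (auto simp: grid_vertices_def mem_Sf)
    have "okv (Lc f j) (f j) (Rc f n j) i" using W' ij by auto
    then show "1 \<le> card {u \<in> Sf f n. grid_adj v u} \<and> card {u \<in> Sf f n. grid_adj v u} \<le> 2"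
      unfolding vv card_nbr_Sf[OF ij(1,2)] okv_def using ij(3) by blast
  qed
  have dom: "\<forall>v\<in>grid_vertices 3 n - Sf f n. \<exists>u\<in>Sf f n. grid_adj v u"
  proof
    fix v assume v: "v \<in> grid_vertices 3 n - Sf f n"
    then have "1 \<le> card {u \<in> Sf f n. grid_adj v u}" using cd by blast
    then have "{u \<in> Sf f n. grid_adj v u} \<noteq> {}" by (metis card.empty not_one_le_zero)
    then show "\<exists>u\<in>Sf f n. grid_adj v u" by auto
  qed
  show "indep_12_set (grid_vertices 3 n) grid_adj (Sf f n)"
    unfolding indep_12_set_def independent_set_def dominating_set_def
    using ind cd dom Sf_sub by blast
qed

definition colS :: "(nat \<times> nat) set \<Rightarrow> nat \<Rightarrow> col" where
  "colS S j = (if (0, j) \<in> S \<and> (2, j) \<in> S then CTB else if (0, j) \<in> S then CT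
     else if (1, j) \<in> S then CM else if (2, j) \<in> S then CB else CE)"

lemma S_eq_Sf:
  assumes "independent_set (grid_vertices 3 n) grid_adj S"
  shows "S = Sf (colS S) n"
proof -
  have sub: "S \<subseteq> grid_vertices 3 n" and ind: "\<And>u v. u \<in> S \<Longrightarrow> v \<in> S \<Longrightarrow> \<not> grid_adj u v"
    using assms unfolding independent_set_def by blast+
  have n01: "\<not> ((0, j) \<in> S \<and> (1, j) \<in> S)" for j using ind[of "(0,j)" "(1,j)"] by (auto simp: grid_adj_def)
  have n12: "\<not> ((1, j) \<in> S \<and> (2, j) \<in> S)" for j using ind[of "(1,j)" "(2,j)"] by (auto simp: grid_adj_def)
  show ?thesis
  proof (rule set_eqI)
    fix x :: "nat \<times> nat"
    obtain i j where xx: "x = (i, j)" by (cases x)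
    show "x \<in> S \<longleftrightarrow> x \<in> Sf (colS S) n"
    proof (cases "i < 3 \<and> j < n")
      case True
      then have "i = 0 \<or> i = 1 \<or> i = 2" by auto
      then show ?thesis unfolding xx Sf_def using True n01[of j] n12[of j]
        by (auto simp: colS_def)
    next
      case False
      then show ?thesis using sub unfolding xx Sf_def grid_vertices_def by auto
    qed
  qed
qed

lemma card_col: "card {i. i < 3 \<and> mem c i} = w c"
proof -
  have "{i. i < 3 \<and> mem c i} = (case c of CE \<Rightarrow> {} | CT \<Rightarrow> {0} | CM \<Rightarrow> {1} | CB \<Rightarrow> {2} | CTB \<Rightarrow> {0, 2})"
    by (cases c) auto
  then show ?thesis by (cases c) simp_all
qed

lemma card_Sf: "card (Sf f n) = (\<Sum>j<n. w (f j))"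
proof (induction n)
  case 0 then show ?case by (simp add: Sf_def)
next
  case (Suc n)
  have e: "Sf f (Suc n) = Sf f n \<union> (\<lambda>i. (i, n)) ` {i. i < 3 \<and> mem (f n) i}"
    by (auto simp: Sf_def image_iff less_Suc_eq)
  have d: "Sf f n \<inter> (\<lambda>i. (i, n)) ` {i. i < 3 \<and> mem (f n) i} = {}" by (auto simp: Sf_def)
  have c: "card ((\<lambda>i. (i, n)) ` {i. i < 3 \<and> mem (f n) i}) = w (f n)"
    by (subst card_image) (auto simp: inj_on_def card_col)
  show ?case unfolding e using Sf_fin d c Suc.IH by (simp add: card_Un_disjoint)
qed

fun pr :: "nat \<Rightarrow> col" where
  "pr 0 = CM" | "pr (Suc 0) = CE" | "pr (Suc (Suc 0)) = CTB" | "pr _ = CE"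

definition pat :: "nat \<Rightarrow> col" where "pat k = pr (k mod 4)"

lemma pr_simps [simp]: "pr 2 = CTB" "pr 3 = CE" by (simp_all add: numeral_2_eq_2 numeral_3_eq_3)

lemma pat_win: "win (pat k) (pat (Suc k)) (pat (Suc (Suc k)))"
proof -
  have "k mod 4 = 0 \<or> k mod 4 = 1 \<or> k mod 4 = 2 \<or> k mod 4 = 3" by auto
  then show ?thesis
  proof (elim disjE)
    assume h: "k mod 4 = 0"
    have "Suc k mod 4 = 1" "Suc (Suc k) mod 4 = 2" using h by presburger+
    then show ?thesis using h by (simp add: pat_def win_def okv_def cnt_def)
  next
    assume h: "k mod 4 = 1"
    have "Suc k mod 4 = 2" "Suc (Suc k) mod 4 = 3" using h by presburger+
    then show ?thesis using h by (simp add: pat_def win_def okv_def cnt_def numeral_3_eq_3)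
  next
    assume h: "k mod 4 = 2"
    have "Suc k mod 4 = 3" "Suc (Suc k) mod 4 = 0" using h by presburger+
    then show ?thesis using h by (simp add: pat_def win_def okv_def cnt_def numeral_3_eq_3)
  next
    assume h: "k mod 4 = 3"
    have "Suc k mod 4 = 0" "Suc (Suc k) mod 4 = 1" using h by presburger+
    then show ?thesis using h by (simp add: pat_def win_def okv_def cnt_def numeral_3_eq_3)
  qed
qed

lemma SP: "(\<Sum>j<N. w (pat j)) = 3 * (N div 4) + (if N mod 4 = 0 then 0 else if N mod 4 = 3 then 3 else 1)"
proof (induction N)
  case 0 then show ?case by simp
next
  case (Suc N)
  have "N mod 4 = 0 \<or> N mod 4 = 1 \<or> N mod 4 = 2 \<or> N mod 4 = 3" by auto
  then show ?case
  proof (elim disjE)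
    assume h: "N mod 4 = 0"
    have "Suc N mod 4 = 1" "Suc N div 4 = N div 4" using h by presburger+
    then show ?thesis using h Suc.IH by (simp add: pat_def)
  next
    assume h: "N mod 4 = 1"
    have "Suc N mod 4 = 2" "Suc N div 4 = N div 4" using h by presburger+
    then show ?thesis using h Suc.IH by (simp add: pat_def)
  next
    assume h: "N mod 4 = 2"
    have "Suc N mod 4 = 3" "Suc N div 4 = N div 4" using h by presburger+
    then show ?thesis using h Suc.IH by (simp add: pat_def)
  next
    assume h: "N mod 4 = 3"
    have "Suc N mod 4 = 0" "Suc N div 4 = Suc (N div 4)" using h by presburger+
    then show ?thesis using h Suc.IH by (simp add: pat_def numeral_3_eq_3)
  qed
qed

lemma windows:
  assumes "0 < n" "\<And>j. win (Lc f j) (f j) (f (Suc j))" "win (Lc f (n - 1)) (f (n - 1)) CE"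
  shows "\<forall>j<n. win (Lc f j) (f j) (Rc f n j)"
proof (intro allI impI)
  fix j assume "j < n"
  show "win (Lc f j) (f j) (Rc f n j)"
  proof (cases "Suc j < n")
    case True then show ?thesis using assms(2) by (simp add: Rc_def)
  next
    case False then have "j = n - 1" using \<open>j < n\<close> by auto
    then show ?thesis using assms(3) False by (simp add: Rc_def)
  qed
qed

definition f02 :: "nat \<Rightarrow> col" where
  "f02 j = (if j = 0 then CT else if j = 1 then CB else if j = 2 then CT else pat (Suc j))"
definition f3 :: "nat \<Rightarrow> col" where
  "f3 j = (if j = 0 then CT else if j = 1 then CB else pat (Suc (Suc j)))"

lemma pat4: "pat 4 = CM" "pat 5 = CE" "pat 6 = CTB" by (simp_all add: pat_def)

lemma int_f1: "win (Lc pat j) (pat j) (pat (Suc j))"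
proof (cases j)
  case 0 then show ?thesis by (simp add: Lc_def pat_def win_def okv_def cnt_def)
next
  case (Suc k) then show ?thesis using pat_win[of k] by (simp add: Lc_def)
qed

lemma int_f02: "win (Lc f02 j) (f02 j) (f02 (Suc j))"
proof -
  consider "j = 0" | "j = 1" | "j = 2" | "j = 3" | "j \<ge> 4" by linarith
  then show ?thesis
  proof cases
    case 5
    then have "Lc f02 j = pat j" "f02 j = pat (Suc j)" "f02 (Suc j) = pat (Suc (Suc j))"
      by (auto simp: Lc_def f02_def)
    then show ?thesis using pat_win[of j] by simp
  qed (simp_all add: Lc_def f02_def pat_def win_def okv_def cnt_def)
qed

lemma int_f3: "win (Lc f3 j) (f3 j) (f3 (Suc j))"
proof -
  consider "j = 0" | "j = 1" | "j = 2" | "j \<ge> 3" by linarith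
  then show ?thesis
  proof cases
    case 4
    then have "Lc f3 j = pat (Suc j)" "f3 j = pat (Suc (Suc j))" "f3 (Suc j) = pat (Suc (Suc (Suc j)))"
      by (auto simp: Lc_def f3_def)
    then show ?thesis using pat_win[of "Suc j"] by simp
  qed (simp_all add: Lc_def f3_def pat_def win_def okv_def cnt_def)
qed

lemma sum_f02: "n \<ge> 3 \<Longrightarrow> (\<Sum>j<n. w (f02 j)) = (\<Sum>j<Suc n. w (pat j))"
proof (induction n rule: dec_induct)
  case base then show ?case by (simp add: f02_def pat_def numeral_3_eq_3)
next
  case (step n) then show ?case by (simp add: f02_def)
qed

lemma sum_f3: "n \<ge> 2 \<Longrightarrow> (\<Sum>j<n. w (f3 j)) + 1 = (\<Sum>j<Suc (Suc n). w (pat j))"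
proof (induction n rule: dec_induct)
  case base then show ?case by (simp add: f3_def pat_def numeral_2_eq_2)
next
  case (step n) then show ?case by (simp add: f3_def)
qed

lemma decomp: "n mod 4 = c mod 4 \<Longrightarrow> n \<ge> c \<Longrightarrow> \<exists>p. n = 4 * p + (c::nat)"
proof -
  assume a: "n mod 4 = c mod 4" "n \<ge> c"
  have e1: "n = 4 * (n div 4) + n mod 4" and e2: "c = 4 * (c div 4) + c mod 4" by simp_all
  have "c div 4 \<le> n div 4" using a(2) by (simp add: div_le_mono)
  moreover have "4 * (n div 4 - c div 4) = 4 * (n div 4) - 4 * (c div 4)" by (simp add: diff_mult_distrib2)
  ultimately have "n = 4 * (n div 4 - c div 4) + c" using e1 e2 a(1) by linarith
  then show ?thesis by blast
qed
lemma winCMend: "win CE CM CE" and winCTBend: "win CE CTB CE" and winCTCM: "win CT CM CE" and winCBCM: "win CB CM CE"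
  by (simp_all add: win_def okv_def cnt_def)

lemma upper:
  assumes "n \<ge> 3"
  shows "\<exists>f. indep_12_set (grid_vertices 3 n) grid_adj (Sf f n) \<and>
     card (Sf f n) = (if n mod 4 = 2 then (3 * n + 8) div 4 else (3 * n + 4) div 4)"
proof -
  have n0: "0 < n" using assms by auto
  have "n mod 4 = 0 \<or> n mod 4 = 1 \<or> n mod 4 = 2 \<or> n mod 4 = 3" by auto
  then show ?thesis
  proof (elim disjE)
    assume h: "n mod 4 = 1"
    obtain p0 where "n = 4 * p0 + 1" using decomp[of n 1] h assms by auto
    then obtain p where np: "n = 4 * p + 5" using assms by (cases p0) auto
    have "win (Lc pat (n - 1)) (pat (n - 1)) CE"
      unfolding np by (simp add: Lc_def pat_def winCMend)
    then have W: "\<forall>j<n. win (Lc pat j) (pat j) (Rc pat n j)" by (rule windows[OF n0 int_f1])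
    have c: "card (Sf pat n) = (3 * n + 4) div 4" unfolding card_Sf SP by (simp add: np)
    show ?thesis using W c h by (intro exI[of _ pat]) (simp add: char)
  next
    assume h: "n mod 4 = 0"
    obtain p where np: "n = 4 * p" using decomp[of n 0] h by auto
    have "win (Lc f02 (n - 1)) (f02 (n - 1)) CE"
    proof (cases "n = 4")
      case True then show ?thesis by (simp add: Lc_def f02_def pat_def winCTCM)
    next
      case False
      then obtain p' where np': "n = 4 * p' + 8" using np assms
        by (cases p; cases "p - 1") auto
      show ?thesis unfolding np' by (simp add: Lc_def f02_def pat_def winCMend)
    qed
    then have W: "\<forall>j<n. win (Lc f02 j) (f02 j) (Rc f02 n j)" by (rule windows[OF n0 int_f02])
    have c1: "card (Sf f02 n) = (\<Sum>j<Suc n. w (pat j))" unfolding card_Sf using sum_f02[OF assms] by simp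
    have c: "card (Sf f02 n) = (3 * n + 4) div 4" unfolding c1 SP by (simp add: np)
    show ?thesis using W c h by (intro exI[of _ f02]) (simp add: char)
  next
    assume h: "n mod 4 = 2"
    obtain p0 where "n = 4 * p0 + 2" using decomp[of n 2] h assms by auto
    then obtain p where np: "n = 4 * p + 6" using assms by (cases p0) auto
    have "win (Lc f02 (n - 1)) (f02 (n - 1)) CE"
      unfolding np by (simp add: Lc_def f02_def pat_def winCTBend)
    then have W: "\<forall>j<n. win (Lc f02 j) (f02 j) (Rc f02 n j)" by (rule windows[OF n0 int_f02])
    have c1: "card (Sf f02 n) = (\<Sum>j<Suc n. w (pat j))" unfolding card_Sf using sum_f02[OF assms] by simp
    have c: "card (Sf f02 n) = (3 * n + 8) div 4" unfolding c1 SP by (simp add: np)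
    show ?thesis using W c h by (intro exI[of _ f02]) (simp add: char)
  next
    assume h: "n mod 4 = 3"
    obtain p where np: "n = 4 * p + 3" using decomp[of n 3] h assms by auto
    have "win (Lc f3 (n - 1)) (f3 (n - 1)) CE"
    proof (cases "n = 3")
      case True then show ?thesis by (simp add: Lc_def f3_def pat_def winCBCM)
    next
      case False
      then obtain p' where np': "n = 4 * p' + 7" using np by (cases p) auto
      show ?thesis unfolding np' by (simp add: Lc_def f3_def pat_def winCMend)
    qed
    then have W: "\<forall>j<n. win (Lc f3 j) (f3 j) (Rc f3 n j)" by (rule windows[OF n0 int_f3])
    have n2: "n \<ge> 2" using assms by auto
    have c1: "card (Sf f3 n) + 1 = (\<Sum>j<Suc (Suc n). w (pat j))" unfolding card_Sf using sum_f3[OF n2] by simp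
    have c: "card (Sf f3 n) = (3 * n + 4) div 4" using c1 unfolding SP by (simp add: np)
    show ?thesis using W c h by (intro exI[of _ f3]) (simp add: char)
  qed
qed



theorem mainTheorem4:
  fixes n :: nat
  assumes "n \<ge> 3"
  shows "has_indep_12_set (grid_vertices 3 n) grid_adj \<and>
         indep_12_number (grid_vertices 3 n) grid_adj =
           (if n mod 4 = 2 then (3 * n + 8) div 4 else (3 * n + 4) div 4)"
proof -
  let ?F = "(if n mod 4 = 2 then (3 * n + 8) div 4 else (3 * n + 4) div 4)"
  obtain f where f: "indep_12_set (grid_vertices 3 n) grid_adj (Sf f n)" "card (Sf f n) = ?F"
    using upper[OF assms] by blast
  have low: "?F \<le> card S" if S: "indep_12_set (grid_vertices 3 n) grid_adj S" for S
  proof -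
    define g where "g = colS S"
    have ind: "independent_set (grid_vertices 3 n) grid_adj S" using S unfolding indep_12_set_def by blast
    have Se: "S = Sf g n" unfolding g_def by (rule S_eq_Sf[OF ind])
    have W: "\<forall>j<n. win (Lc g j) (g j) (Rc g n j)" using S unfolding Se char .
    have d: "Suc (0 + (n - 1)) = n" using assms by auto
    have W2: "\<forall>j. 0 \<le> j \<and> j < n \<longrightarrow> win (if j = 0 then CE else g (j - 1)) (g j) (if Suc j < n then g (Suc j) else CE)"
      using W by (simp add: Lc_def Rc_def)
    have "R (n - 1) CE (g 0) \<and> H (n - 1) CE (g 0) \<le> (\<Sum>j=0..<n. w (g j))"
      using LB[of "n - 1" n g] d W2 by blast
    then have "?F \<le> (\<Sum>j=0..<n. w (g j))" using final_bound[OF assms] by fastforce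
    also have "\<dots> = card S" unfolding Se card_Sf by (simp add: atLeast0LessThan)
    finally show ?thesis .
  qed
  have "indep_12_number (grid_vertices 3 n) grid_adj = ?F"
    unfolding indep_12_number_def
  proof (rule Least_equality)
    show "\<exists>S. indep_12_set (grid_vertices 3 n) grid_adj S \<and> card S = ?F" using f by blast
  next
    fix k assume "\<exists>S. indep_12_set (grid_vertices 3 n) grid_adj S \<and> card S = k"
    then show "?F \<le> k" using low by blast
  qed
  moreover have "has_indep_12_set (grid_vertices 3 n) grid_adj"
    unfolding has_indep_12_set_def using f by blast
  ultimately show ?thesis by blast
qed

end
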